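(* Let $f:\{0,1\}^n\to\{0,1\}$, and consider the following algorithm: (1) choose $k\in\{0,1,\dots,\lceil\log n\rceil\}$ uniformly at random and set $\ell:=2^k$; (2) choose $x\in\{0,1\}^n$ uniformly at random; (3) perform an $\ell$-step random walk $p$ on $H_n$ from $x$, ending at $y$; (4) if $f(x)\ne f(y)$, perform binary search on the vertex sequence of $p$ to find an influential edge $(u,v)$ of $p$, and REJECT if $(u,v)$ is a violating edge; (5) otherwise ACCEPT. Then, conditioned on the length chosen in step (1) being $\ell$, the algorithm rejects with probability $\Omega\!\left(\frac{\ell}{n}\cdot\frac{|F_\ell|}{2^n}\right)$, where $F_\ell$ is the set of edges $(x,y)$ of $H_n$ that are violating and such that both $x$ and $y$ are $\ell$-sticky.
   Context: $H_n$ is the undirected hypercube graph on $\{0,1\}^n$ (edges between points at Hamming distance $1$); a random walk step moves to a uniformly random neighbor. The coordinate-wise partial order is $\prec$. An edge $(x,y)$ is influential if $f(x)\ne f(y)$, and violating if $x\prec y$, $f(x)=1$, $f(y)=0$. A vertex $x$ is $\ell$-sticky if an $\ell$-step random walk on $H_n$ starting from $x$ traverses no influential edge with probability at least $1/2$. Binary search on a walk with vertices $x=z_0,\dots,z_\ell=y$ and $f(z_0)\ne f(z_\ell)$ returns some index $i$ with $f(z_i)\ne f(z_{i+1})$. Logarithms are base 2. *)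

theory Defs
  imports Complex_Main
begin

text \<open>Vertices of H_n: boolean lists of length n (False = 0, True = 1).\<close>
definition cube :: "nat \<Rightarrow> bool list set" where
  "cube n = {x. length x = n}"

definition flip :: "bool list \<Rightarrow> nat \<Rightarrow> bool list" where
  "flip x i = x[i := \<not> x ! i]"

definition hc_edge :: "nat \<Rightarrow> bool list \<Rightarrow> bool list \<Rightarrow> bool" where
  "hc_edge n x y \<longleftrightarrow> x \<in> cube n \<and> (\<exists>i<n. y = flip x i)"

definition cw_le :: "bool list \<Rightarrow> bool list \<Rightarrow> bool" where
  "cw_le x y \<longleftrightarrow> list_all2 (\<le>) x y"

definition influential :: "(bool list \<Rightarrow> bool) \<Rightarrow> bool list \<Rightarrow> bool list \<Rightarrow> bool" where
  "influential f x y \<longleftrightarrow> f x \<noteq> f y"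

definition violating :: "(bool list \<Rightarrow> bool) \<Rightarrow> bool list \<Rightarrow> bool list \<Rightarrow> bool" where
  "violating f x y \<longleftrightarrow> cw_le x y \<and> f x \<and> \<not> f y"

definition violating_edge :: "(bool list \<Rightarrow> bool) \<Rightarrow> bool list \<Rightarrow> bool list \<Rightarrow> bool" where
  "violating_edge f u v \<longleftrightarrow> violating f u v \<or> violating f v u"

text \<open>An l-step random walk on H_n is determined by the sequence of coordinates flipped;
  each of the n^l sequences in {0..<n}^l is equally likely (uniform neighbour at each step).\<close>
definition walks :: "nat \<Rightarrow> nat \<Rightarrow> nat list set" where
  "walks n l = {is. length is = l \<and> set is \<subseteq> {..<n}}"

fun walk_verts :: "bool list \<Rightarrow> nat list \<Rightarrow> bool list list" where
  "walk_verts x [] = [x]"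
| "walk_verts x (i # is) = x # walk_verts (flip x i) is"

definition no_infl_walk :: "(bool list \<Rightarrow> bool) \<Rightarrow> bool list \<Rightarrow> nat list \<Rightarrow> bool" where
  "no_infl_walk f x is \<longleftrightarrow>
     (let zs = walk_verts x is in \<forall>j < length is. \<not> influential f (zs ! j) (zs ! Suc j))"

definition sticky :: "nat \<Rightarrow> (bool list \<Rightarrow> bool) \<Rightarrow> nat \<Rightarrow> bool list \<Rightarrow> bool" where
  "sticky n f l x \<longleftrightarrow>
     real (card {is \<in> walks n l. no_infl_walk f x is}) / real n ^ l \<ge> 1 / 2"

definition F_set :: "nat \<Rightarrow> (bool list \<Rightarrow> bool) \<Rightarrow> nat \<Rightarrow> (bool list \<times> bool list) set" where
  "F_set n f l = {(x, y). hc_edge n x y \<and> violating f x y \<and> sticky n f l x \<and> sticky n f l y}"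

text \<open>A binary-search procedure bs (applied to the vertex sequence z_0..z_l of a walk) is valid
  if, whenever f(z_0) \<noteq> f(z_l), it returns an index i < l with f(z_i) \<noteq> f(z_(i+1)).\<close>
definition valid_bs :: "nat \<Rightarrow> (bool list \<Rightarrow> bool) \<Rightarrow> nat \<Rightarrow> (bool list list \<Rightarrow> nat) \<Rightarrow> bool" where
  "valid_bs n f l bs \<longleftrightarrow>
     (\<forall>x \<in> cube n. \<forall>is \<in> walks n l.
        let zs = walk_verts x is in
        f (hd zs) \<noteq> f (last zs) \<longrightarrow>
          bs zs < l \<and> f (zs ! bs zs) \<noteq> f (zs ! Suc (bs zs)))"

definition rejects :: "(bool list \<Rightarrow> bool) \<Rightarrow> (bool list list \<Rightarrow> nat) \<Rightarrow> bool list \<Rightarrow> nat list \<Rightarrow> bool" where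
  "rejects f bs x is \<longleftrightarrow>
     (let zs = walk_verts x is in
        f (hd zs) \<noteq> f (last zs) \<and> violating_edge f (zs ! bs zs) (zs ! Suc (bs zs)))"

definition rej_prob :: "nat \<Rightarrow> (bool list \<Rightarrow> bool) \<Rightarrow> (bool list list \<Rightarrow> nat) \<Rightarrow> nat \<Rightarrow> real" where
  "rej_prob n f bs l =
     real (card {(x, is). x \<in> cube n \<and> is \<in> walks n l \<and> rejects f bs x is})
     / (2 ^ n * real n ^ l)"

end

theory Submission imports Defs begin

lemma walk_verts_len[simp]: "length (walk_verts x is) = Suc (length is)"
  by (induction "is" arbitrary: x) auto
lemma walk_verts_nth0[simp]: "walk_verts x is ! 0 = x"
  by (cases "is") auto
lemma walk_verts_ne[simp]: "walk_verts x is \<noteq> []"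
  by (cases "is") auto
lemma walk_verts_hd[simp]: "hd (walk_verts x is) = x"
  by (cases "is") auto

definition endpt :: "bool list \<Rightarrow> nat list \<Rightarrow> bool list" where
  "endpt x is = last (walk_verts x is)"
lemma endpt_Nil[simp]: "endpt x [] = x" by (simp add: endpt_def)
lemma endpt_Cons[simp]: "endpt x (i # is) = endpt (flip x i) is" by (simp add: endpt_def)

lemma walk_verts_append:
  "walk_verts x (a @ b) = butlast (walk_verts x a) @ walk_verts (endpt x a) b"
  by (induction a arbitrary: x) auto

lemma flip_flip[simp]: "flip (flip x i) i = x"
  unfolding flip_def by (cases "i < length x") (auto simp: list_update_beyond)
lemma length_flip[simp]: "length (flip x i) = length x"
  unfolding flip_def by simp
lemma length_endpt[simp]: "length (endpt x p) = length x"
  by (induction p arbitrary: x) auto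

lemma walk_verts_rev: "walk_verts (endpt u p) (rev p) = rev (walk_verts u p)"
proof (induction p arbitrary: u)
  case Nil then show ?case by simp
next
  case (Cons i p)
  define W where "W = walk_verts (flip u i) p"
  define y where "y = endpt (flip u i) p"
  have IH: "walk_verts y (rev p) = rev W" using Cons unfolding W_def y_def by simp
  have e: "endpt y (rev p) = flip u i"
    unfolding endpt_def IH W_def by (simp add: last_rev)
  have "walk_verts (endpt u (i # p)) (rev (i # p)) = butlast (rev W) @ [flip u i, u]"
    by (simp add: walk_verts_append y_def[symmetric] IH e)
  also have "\<dots> = (butlast (rev W) @ [last (rev W)]) @ [u]"
    by (simp add: W_def last_rev)
  also have "\<dots> = rev W @ [u]"
  proof -
    have "butlast (rev W) @ [last (rev W)] = rev W" by (rule append_butlast_last_id) (simp add: W_def)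
    then show ?thesis by simp
  qed
  finally show ?case by (simp add: W_def)
qed

lemma endpt_rev[simp]: "endpt (endpt u p) (rev p) = u"
  unfolding endpt_def[of "endpt u p"] walk_verts_rev by (simp add: last_rev)

fun ni :: "(bool list \<Rightarrow> bool) \<Rightarrow> bool list \<Rightarrow> nat list \<Rightarrow> bool" where
  "ni f x [] = True"
| "ni f x (i # js) = (f x = f (flip x i) \<and> ni f (flip x i) js)"

lemma all_less_Suc_split: "(\<forall>j<Suc m. P j) \<longleftrightarrow> P 0 \<and> (\<forall>j<m. P (Suc j))"
  by (auto simp: less_Suc_eq_0_disj)

lemma no_infl_iff: "no_infl_walk f x js \<longleftrightarrow> ni f x js"
proof (induction js arbitrary: x)
  case Nil then show ?case by (simp add: no_infl_walk_def)
next
  case (Cons i js)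
  show ?case using Cons[of "flip x i"]
    unfolding no_infl_walk_def Let_def influential_def
    by (simp only: walk_verts.simps length_Cons all_less_Suc_split nth_Cons_0 nth_Cons_Suc
        walk_verts_nth0 ni.simps) blast
qed

lemma ni_append: "ni f x (a @ b) \<longleftrightarrow> ni f x a \<and> ni f (endpt x a) b"
  by (induction a arbitrary: x) auto

lemma ni_set: "ni f x p \<longleftrightarrow> (\<forall>z\<in>set (walk_verts x p). f z = f x)"
proof (induction p arbitrary: x)
  case Nil then show ?case by simp
next
  case (Cons i p)
  have "flip x i \<in> set (walk_verts (flip x i) p)"
    using walk_verts_nth0[of "flip x i" p] nth_mem[of 0 "walk_verts (flip x i) p"] by simp
  then show ?case using Cons[of "flip x i"] by auto
qed


lemma struct_zs:
  assumes "ni f u p" "ni f (flip u i) s"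
  defines "zs \<equiv> walk_verts (endpt u p) (rev p @ i # s)"
  shows "length zs = length p + length s + 2"
    and "\<And>b. b \<le> length p + length s + 1 \<Longrightarrow>
            f (zs!b) = (if b \<le> length p then f u else f (flip u i))"
    and "zs ! length p = u" and "zs ! Suc (length p) = flip u i"
proof -
  define A where "A = walk_verts u p"
  define B where "B = walk_verts (flip u i) s"
  have zs: "zs = butlast (rev A) @ u # B"
    unfolding zs_def walk_verts_append walk_verts_rev endpt_rev A_def B_def by simp
  have lA: "length (butlast (rev A)) = length p" by (simp add: A_def)
  have fA: "\<forall>z\<in>set A. f z = f u" using assms(1) ni_set A_def by blast
  have fB: "\<forall>z\<in>set B. f z = f (flip u i)" using assms(2) ni_set B_def by blast
  show "length zs = length p + length s + 2" by (simp add: zs A_def B_def)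
  have "zs ! length (butlast (rev A)) = u" by (simp only: zs nth_append_length)
  then show zp: "zs ! length p = u" by (simp only: lA)
  show "zs ! Suc (length p) = flip u i" by (simp add: zs nth_append B_def A_def)
  fix b assume b: "b \<le> length p + length s + 1"
  show "f (zs!b) = (if b \<le> length p then f u else f (flip u i))"
  proof (cases "b < length p")
    case True
    then have "zs ! b = butlast (rev A) ! b" unfolding zs using lA by (simp add: nth_append del: length_butlast length_rev)
    moreover have "butlast (rev A) ! b \<in> set A"
      using True lA nth_mem[of b "butlast (rev A)"] in_set_butlastD by fastforce
    ultimately show ?thesis using fA True by simp
  next
    case False
    show ?thesis
    proof (cases "b = length p")
      case True then show ?thesis using zp by simp
    next
      case False2: False
      then have bb: "b > length p" using False by simp
      then have "zs ! b = B ! (b - length p - 1)"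
        by (simp add: zs nth_append nth_Cons' A_def)
      moreover have "B ! (b - length p - 1) \<in> set B"
        using b bb by (intro nth_mem) (simp add: B_def)
      ultimately show ?thesis using fB bb by simp
    qed
  qed
qed


lemma unique_pos:
  assumes "ni f u p" "ni f (flip u i) s" "f u \<noteq> f (flip u i)"
    and "b < length p + length s + 1"
    and "f (walk_verts (endpt u p) (rev p @ i # s) ! b) \<noteq> f (walk_verts (endpt u p) (rev p @ i # s) ! Suc b)"
  shows "b = length p"
  using struct_zs(2)[OF assms(1,2), of b] struct_zs(2)[OF assms(1,2), of "Suc b"] assms(4,5)
  by (auto split: if_splits)

lemma rejects_lemma:
  assumes "valid_bs n f l bs" "u \<in> cube n" "i < n" "violating f u (flip u i)"
    "ni f u p" "ni f (flip u i) s" "set p \<subseteq> {..<n}" "set s \<subseteq> {..<n}"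
    "length p + length s + 1 = l"
  shows "rejects f bs (endpt u p) (rev p @ i # s)"
proof -
  define zs where "zs = walk_verts (endpt u p) (rev p @ i # s)"
  have fne: "f u \<noteq> f (flip u i)" using assms(4) by (auto simp: violating_def)
  have x: "endpt u p \<in> cube n" using assms(2) by (simp add: cube_def)
  have w: "rev p @ i # s \<in> walks n l" using assms(3,7,8,9) by (auto simp: walks_def)
  have len: "length zs = l + 1" using struct_zs(1)[OF assms(5,6)] assms(9) by (simp add: zs_def)
  have "hd zs = zs ! 0" by (simp add: zs_def hd_conv_nth)
  then have h: "f (hd zs) = f u" using struct_zs(2)[OF assms(5,6), of 0] by (simp add: zs_def)
  have "last zs = zs ! l" using len by (simp add: last_conv_nth zs_def)
  then have la: "f (last zs) = f (flip u i)" using struct_zs(2)[OF assms(5,6), of l] assms(9)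
    by (simp add: zs_def)
  have hl: "f (hd zs) \<noteq> f (last zs)" using h la fne by simp
  then have b: "bs zs < l \<and> f (zs ! bs zs) \<noteq> f (zs ! Suc (bs zs))"
    using assms(1) x w unfolding valid_bs_def zs_def Let_def by blast
  then have "bs zs = length p" using unique_pos[OF assms(5,6) fne, of "bs zs"] assms(9)
    by (simp add: zs_def)
  then have "zs ! bs zs = u" "zs ! Suc (bs zs) = flip u i"
    using struct_zs(3,4)[OF assms(5,6)] by (simp_all add: zs_def)
  then show ?thesis using hl assms(4) unfolding rejects_def Let_def zs_def[symmetric]
    by (simp add: violating_edge_def)
qed

lemma inj_lemma:
  assumes "ni f u p" "ni f (flip u i) s" "f u \<noteq> f (flip u i)"
    "ni f u' p'" "ni f (flip u' i') s'" "f u' \<noteq> f (flip u' i')"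
    "length p + length s + 1 = l" "length p' + length s' + 1 = l"
    "endpt u p = endpt u' p'" "rev p @ i # s = rev p' @ i' # s'"
  shows "u = u' \<and> i = i' \<and> p = p' \<and> s = s'"
proof -
  define zs where "zs = walk_verts (endpt u p) (rev p @ i # s)"
  have zs': "zs = walk_verts (endpt u' p') (rev p' @ i' # s')" using assms(9,10) zs_def by simp
  have "f (zs ! length p) \<noteq> f (zs ! Suc (length p))"
    using struct_zs(3,4)[OF assms(1,2)] assms(3) by (simp add: zs_def)
  then have lp: "length p = length p'"
    using unique_pos[OF assms(4,5,6), of "length p"] assms(7,8) zs' by simp
  have "u = u'" using struct_zs(3)[OF assms(1,2)] struct_zs(3)[OF assms(4,5)] zs' lp
    by (simp add: zs_def)
  moreover have "rev p = rev p' \<and> i # s = i' # s'"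
    using assms(10) lp by (simp add: append_eq_append_conv)
  ultimately show ?thesis by simp
qed


lemma walks_eq: "walks n l = {xs. set xs \<subseteq> {..<n} \<and> length xs = l}"
  by (auto simp: walks_def)
lemma finite_walks[simp]: "finite (walks n l)"
  unfolding walks_eq by (rule finite_lists_length_eq) simp
lemma card_walks[simp]: "card (walks n l) = n ^ l"
  unfolding walks_eq by (subst card_lists_length_eq) simp_all

lemma sticky_prefix:
  assumes "sticky n f l u" "m \<le> l" "n \<ge> 1"
  shows "real n ^ m / 2 \<le> real (card {p \<in> walks n m. ni f u p})"
proof -
  define A where "A = {p \<in> walks n m. ni f u p}"
  define Q where "Q = {q \<in> walks n l. no_infl_walk f u q}"
  have sub: "Q \<subseteq> (\<lambda>(p,t). p @ t) ` (A \<times> walks n (l - m))"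
  proof
    fix q assume q: "q \<in> Q"
    then have "ni f u (take m q @ drop m q)" by (simp add: Q_def no_infl_iff)
    then have "ni f u (take m q)" by (simp only: ni_append)
    moreover have "take m q \<in> walks n m" "drop m q \<in> walks n (l - m)"
      using q assms(2) by (auto simp: Q_def walks_def dest: in_set_takeD in_set_dropD)
    ultimately have "(take m q, drop m q) \<in> A \<times> walks n (l - m)" by (simp add: A_def)
    then show "q \<in> (\<lambda>(p,t). p @ t) ` (A \<times> walks n (l - m))"
      by (intro image_eqI[of _ _ "(take m q, drop m q)"]) auto
  qed
  have fA: "finite A" by (simp add: A_def)
  have "card Q \<le> card ((\<lambda>(p,t). p @ t) ` (A \<times> walks n (l - m)))"
    using sub fA by (intro card_mono) auto
  also have "\<dots> \<le> card (A \<times> walks n (l - m))" by (rule card_image_le) (simp add: fA)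
  also have "\<dots> = card A * n ^ (l - m)" by (simp add: card_cartesian_product)
  finally have c: "real (card Q) \<le> real (card A) * real n ^ (l - m)"
    by (metis of_nat_le_iff of_nat_mult of_nat_power)
  have npos: "real n ^ l > 0" using assms(3) by simp
  have "1/2 \<le> real (card Q) / real n ^ l" using assms(1) by (simp add: sticky_def Q_def)
  then have "real n ^ l / 2 \<le> real (card Q)" using npos by (simp add: field_simps)
  also have "real n ^ l = real n ^ m * real n ^ (l - m)"
    using assms(2) by (simp flip: power_add)
  finally have "real n ^ m * real n ^ (l - m) / 2 \<le> real (card A) * real n ^ (l - m)"
    using c by linarith
  moreover have "real n ^ (l - m) > 0" using assms(3) by simp
  ultimately show ?thesis unfolding A_def[symmetric] by (simp add: field_simps)
qed

lemma flip_inj: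
  assumes "flip u i = flip u i'" "i < length u" "i' < length u"
  shows "i = i'"
proof (rule ccontr)
  assume "i \<noteq> i'"
  then have "flip u i' ! i = u ! i" by (simp add: flip_def)
  moreover have "flip u i ! i = (\<not> u ! i)" using assms(2) by (simp add: flip_def)
  ultimately show False using assms(1) by simp
qed


lemma flip_cube: "x \<in> cube n \<Longrightarrow> flip x i \<in> cube n"
  by (simp add: cube_def)

lemma main_count:
  assumes n: "n \<ge> 1" and l: "l \<ge> 1" and vb: "valid_bs n f l bs"
  shows "rej_prob n f bs l \<ge> (1/4) * (real l / real n) * (real (card (F_set n f l)) / 2 ^ n)"
proof -
  define F where "F = F_set n f l"
  define E where "E = {(u,i). i < n \<and> (u, flip u i) \<in> F}"
  define P where "P = (\<lambda>u m. {p \<in> walks n m. ni f u p})"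
  define D where "D = (SIGMA e:E. SIGMA j:{..<l}. P (fst e) j \<times> P (flip (fst e) (snd e)) (l - 1 - j))"
  define R where "R = {(x, is). x \<in> cube n \<and> is \<in> walks n l \<and> rejects f bs x is}"
  define g where "g = (\<lambda>((u::bool list,i::nat),(j::nat,(p::nat list,s::nat list))). (endpt u p, rev p @ i # s))"
  have Eprop: "u \<in> cube n \<and> i < n \<and> violating f u (flip u i) \<and> sticky n f l u \<and> sticky n f l (flip u i)"
    if "(u,i) \<in> E" for u i
    using that by (auto simp: E_def F_def F_set_def hc_edge_def)
  have finC: "finite (cube n)"
  proof -
    have "cube n = {xs. set xs \<subseteq> (UNIV::bool set) \<and> length xs = n}" by (auto simp: cube_def)
    then show ?thesis using finite_lists_length_eq[of "UNIV::bool set" n] by simp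
  qed
  have finF: "finite F"
    by (rule finite_subset[of _ "cube n \<times> cube n"])
       (auto simp: F_def F_set_def hc_edge_def finC flip_cube)
  have FE: "F = (\<lambda>(u,i). (u, flip u i)) ` E"
  proof
    show "F \<subseteq> (\<lambda>(u,i). (u, flip u i)) ` E"
    proof
      fix e assume e: "e \<in> F"
      then obtain u v where uv: "e = (u,v)" by (cases e)
      then obtain i where "i < n" "v = flip u i"
        using e by (auto simp: F_def F_set_def hc_edge_def)
      then show "e \<in> (\<lambda>(u,i). (u, flip u i)) ` E"
        using e uv by (intro image_eqI[of _ _ "(u,i)"]) (auto simp: E_def)
    qed
  qed (auto simp: E_def)
  have injE: "inj_on (\<lambda>(u,i). (u, flip u i)) E"
  proof (rule inj_onI)
    fix a b assume ab: "a \<in> E" "b \<in> E" "(\<lambda>(u,i). (u, flip u i)) a = (\<lambda>(u,i). (u, flip u i)) b"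
    obtain u i where a: "a = (u,i)" by (cases a)
    obtain u' i' where b: "b = (u',i')" by (cases b)
    have uu: "u = u'" and ff: "flip u i = flip u' i'" using ab(3) a b by auto
    have "u \<in> cube n" "i < n" "i' < n" using Eprop ab(1,2) a b by blast+
    then have "i = i'" using ff uu flip_inj[of u i i'] by (auto simp: cube_def)
    then show "a = b" using a b uu by simp
  qed
  have cardE: "card E = card F" using FE injE card_image by metis
  have finE: "finite E" using injE finF FE finite_imageD by metis
  have finP: "finite (P u m)" for u m by (simp add: P_def)
  have finR: "finite R"
    by (rule finite_subset[of _ "cube n \<times> walks n l"]) (auto simp: R_def finC)
  have img1: "g ((u,i),(j,(p,s))) \<in> R" if "((u,i),(j,(p,s))) \<in> D" for u i j p s
  proof -
    from that have a: "(u,i) \<in> E" "j < l" "p \<in> P u j" "s \<in> P (flip u i) (l - 1 - j)"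
      by (auto simp: D_def)
    then have "rejects f bs (endpt u p) (rev p @ i # s)"
      using Eprop[OF a(1)] l by (intro rejects_lemma[OF vb]) (auto simp: P_def walks_def)
    moreover have "endpt u p \<in> cube n" using Eprop[OF a(1)] by (simp add: cube_def)
    moreover have "rev p @ i # s \<in> walks n l" using a Eprop[OF a(1)] l
      by (auto simp: P_def walks_def)
    ultimately show "g ((u,i),(j,(p,s))) \<in> R" by (simp add: g_def R_def)
  qed
  have img: "g ` D \<subseteq> R"
  proof
    fix z assume "z \<in> g ` D"
    then obtain d where d: "d \<in> D" "z = g d" by blast
    obtain u i j p s where "d = ((u,i),(j,(p,s)))" by (metis prod.exhaust)
    then show "z \<in> R" using d img1 by simp
  qed
  have inj1: "u = u' \<and> i = i' \<and> j = j' \<and> p = p' \<and> s = s'"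
    if d: "((u,i),(j,(p,s))) \<in> D" "((u',i'),(j',(p',s'))) \<in> D"
      and eq: "g ((u,i),(j,(p,s))) = g ((u',i'),(j',(p',s')))"
    for u i j p s u' i' j' p' s'
  proof -
    from d have a: "(u,i) \<in> E" "j < l" "p \<in> P u j" "s \<in> P (flip u i) (l - 1 - j)"
      by (auto simp: D_def)
    from d have a': "(u',i') \<in> E" "j' < l" "p' \<in> P u' j'" "s' \<in> P (flip u' i') (l - 1 - j')"
      by (auto simp: D_def)
    have f1: "f u \<noteq> f (flip u i)" using Eprop[OF a(1)] by (auto simp: violating_def)
    have f2: "f u' \<noteq> f (flip u' i')" using Eprop[OF a'(1)] by (auto simp: violating_def)
    have r: "u = u' \<and> i = i' \<and> p = p' \<and> s = s'"
      using a a' f1 f2 eq l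
      by (intro inj_lemma[of f u p i s u' p' i' s' l]) (auto simp: P_def walks_def g_def)
    then have "j = j'" using a(3) a'(3) by (auto simp: P_def walks_def)
    then show "u = u' \<and> i = i' \<and> j = j' \<and> p = p' \<and> s = s'" using r by simp
  qed
  have inj: "inj_on g D"
  proof (rule inj_onI)
    fix d d' assume dd: "d \<in> D" "d' \<in> D" "g d = g d'"
    obtain u i j p s where d: "d = ((u,i),(j,(p,s)))" by (metis prod.exhaust)
    obtain u' i' j' p' s' where d': "d' = ((u',i'),(j',(p',s')))" by (metis prod.exhaust)
    show "d = d'" using inj1[of u i j p s u' i' j' p' s'] dd d d' by simp
  qed
  have cardDR: "card D \<le> card R" using card_inj_on_le[OF inj img finR] .
  have cardD: "card D = (\<Sum>e\<in>E. \<Sum>j<l. card (P (fst e) j) * card (P (flip (fst e) (snd e)) (l - 1 - j)))"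
    unfolding D_def using finE finP
    by (simp add: card_cartesian_product card_SigmaI finite_SigmaI)
  have tm: "real n ^ (l - 1) / 4 \<le> real (card (P (fst e) j)) * real (card (P (flip (fst e) (snd e)) (l - 1 - j)))"
    if e: "e \<in> E" and j: "j < l" for e j
  proof -
    obtain u i where ui: "e = (u,i)" by (cases e)
    have s1: "real n ^ j / 2 \<le> real (card (P u j))"
      unfolding P_def using Eprop[OF e[unfolded ui]] j n by (intro sticky_prefix) auto
    have s2: "real n ^ (l - 1 - j) / 2 \<le> real (card (P (flip u i) (l - 1 - j)))"
      unfolding P_def using Eprop[OF e[unfolded ui]] j n by (intro sticky_prefix) auto
    have "real n ^ (l - 1) / 4 = (real n ^ j / 2) * (real n ^ (l - 1 - j) / 2)"
      using j by (simp flip: power_add)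
    also have "\<dots> \<le> real (card (P u j)) * real (card (P (flip u i) (l - 1 - j)))"
      using s1 s2 by (intro mult_mono) auto
    finally show ?thesis using ui by simp
  qed
  have "real (card F) * (real l * (real n ^ (l - 1) / 4)) =
        (\<Sum>e\<in>E. \<Sum>j<l. real n ^ (l - 1) / 4)" using cardE by simp
  also have "\<dots> \<le> (\<Sum>e\<in>E. \<Sum>j<l. real (card (P (fst e) j)) * real (card (P (flip (fst e) (snd e)) (l - 1 - j))))"
    using tm by (intro sum_mono) auto
  also have "\<dots> = real (card D)" unfolding cardD by simp
  also have "\<dots> \<le> real (card R)" using cardDR by simp
  finally have key: "real (card F) * (real l * (real n ^ (l - 1) / 4)) \<le> real (card R)" .
  have nl: "real n ^ l = real n * real n ^ (l - 1)" using l by (cases l) auto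
  have pos: "real n ^ (l - 1) > 0" "real n > 0" using n by auto
  have "(1/4) * (real l / real n) * (real (card F) / 2 ^ n)
        = real (card F) * (real l * (real n ^ (l - 1) / 4)) / (2 ^ n * real n ^ l)"
    using pos unfolding nl by (simp add: field_simps)
  also have "\<dots> \<le> real (card R) / (2 ^ n * real n ^ l)"
    using key pos by (intro divide_right_mono) auto
  also have "\<dots> = rej_prob n f bs l" by (simp add: rej_prob_def R_def)
  finally show ?thesis by (simp add: F_def)
qed

theorem lemma3p5:
  shows "\<exists>c > (0::real). \<forall>n \<ge> 1. \<forall>f :: bool list \<Rightarrow> bool. \<forall>bs. \<forall>k :: nat.
           int k \<le> \<lceil>log 2 (real n)\<rceil> \<longrightarrow> valid_bs n f (2 ^ k) bs \<longrightarrow>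
           rej_prob n f bs (2 ^ k) \<ge> c * (real (2 ^ k) / real n) * (real (card (F_set n f (2 ^ k))) / 2 ^ n)"
proof (intro exI[of _ "1/4"] conjI allI impI)
  fix n :: nat and f bs and k :: nat
  assume "n \<ge> 1" "valid_bs n f (2 ^ k) bs"
  then show "rej_prob n f bs (2 ^ k) \<ge> 1/4 * (real (2 ^ k) / real n) * (real (card (F_set n f (2 ^ k))) / 2 ^ n)"
    using main_count[of n "2^k" f bs] by simp
qed simp

end
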